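(* Let $\mathbf{k}$ be a field, $p\ge3$ an integer, and let $\varphi:\mathbf{k}[e_1,\dots,e_{2p}]\to\mathbf{k}[u_1,\dots,u_p,\alpha]$ be the $\mathbf{k}$-algebra homomorphism with $\varphi(e_i)=u_i$ for $1\le i\le p-1$, $\varphi(e_p)=u_p+\alpha$, and $\varphi(e_i)=u_{i-p}\alpha$ for $p+1\le i\le 2p$. Let $\mathcal{A}=\operatorname{Im}(\varphi)$. Then for each $1\le i\le p-1$ and each $j\ge1$, the monomial $u_i\alpha^j$ lies in $\mathcal{A}$ (and hence in the initial algebra $\mathrm{in}(\mathcal{A})$ with respect to any monomial order).
   Context: For a monomial order on $\mathbf{k}[u_1,\dots,u_p,\alpha]$, the initial algebra $\mathrm{in}(\mathcal{A})$ is the $\mathbf{k}$-span of the leading monomials of the nonzero elements of $\mathcal{A}$. *)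

theory Defs
  imports Main "HOL-Library.Poly_Mapping"
begin

text \<open>Commutative polynomials over 'a in variables X_0, X_1, ...:
  a polynomial is a finitely supported map from monomials (exponent vectors, finitely supported nat to nat) to coefficients.  Here X_0 plays the role of alpha and
  X_i (1 <= i <= p) plays the role of u_i.\<close>

type_synonym 'a mpoly = "(nat \<Rightarrow>\<^sub>0 nat) \<Rightarrow>\<^sub>0 'a"

definition Var :: "nat \<Rightarrow> 'a::comm_semiring_1 mpoly" where
  "Var i = Poly_Mapping.single (Poly_Mapping.single i 1) 1"

definition Const :: "'a::comm_semiring_1 \<Rightarrow> 'a mpoly" where
  "Const c = Poly_Mapping.single 0 c"

abbreviation alpha :: "'a::comm_semiring_1 mpoly" where
  "alpha \<equiv> Var 0"

inductive_set subalg_gen :: "'a::comm_semiring_1 mpoly set \<Rightarrow> 'a mpoly set"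
  for G where
  const: "Const c \<in> subalg_gen G"
| gen: "g \<in> G \<Longrightarrow> g \<in> subalg_gen G"
| add: "a \<in> subalg_gen G \<Longrightarrow> b \<in> subalg_gen G \<Longrightarrow> a + b \<in> subalg_gen G"
| mult: "a \<in> subalg_gen G \<Longrightarrow> b \<in> subalg_gen G \<Longrightarrow> a * b \<in> subalg_gen G"

definition phi_gen :: "nat \<Rightarrow> nat \<Rightarrow> 'a::comm_semiring_1 mpoly" where
  "phi_gen p i =
     (if i \<le> p - 1 then Var i
      else if i = p then Var p + alpha
      else Var (i - p) * alpha)"

text \<open>Image of the k-algebra homomorphism phi: the subalgebra generated by
  the images of the variables e_1, ..., e_2p.\<close>
definition imgA :: "nat \<Rightarrow> 'a::comm_semiring_1 mpoly set" where
  "imgA p = subalg_gen (phi_gen p ` {1..2*p})"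

end

theory Submission
  imports Defs
begin

lemma neg_mem:
  assumes "a \<in> subalg_gen G"
  shows "- (a :: 'a::comm_ring_1 mpoly) \<in> subalg_gen G"
proof -
  have "Const (-1) * a \<in> subalg_gen G"
    by (rule subalg_gen.mult[OF subalg_gen.const assms])
  moreover have "Const (-1) = (-1 :: 'a mpoly)"
    unfolding Const_def by (simp add: one_poly_mapping.abs_eq[symmetric] single_uminus Poly_Mapping.single_uminus)
  ultimately show ?thesis by simp
qed

lemma gen_mem: "k \<in> {1..2*p} \<Longrightarrow> phi_gen p k \<in> imgA p"
  unfolding imgA_def by (rule subalg_gen.gen) auto

theorem lemma6p3:
  fixes p i j :: nat
  assumes "3 \<le> p" and "1 \<le> i" and "i \<le> p - 1" and "1 \<le> j"
  shows "(Var i * alpha ^ j :: 'a::field mpoly) \<in> imgA p"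
proof -
  have g1: "(Var i :: 'a mpoly) \<in> imgA p"
    using gen_mem[of i p, where ?'a='a] assms by (simp add: phi_gen_def)
  have g2: "(Var i * alpha :: 'a mpoly) \<in> imgA p"
  proof -
    have "phi_gen p (p + i) = (Var i * alpha :: 'a mpoly)" using assms unfolding phi_gen_def by auto
    moreover have "phi_gen p (p + i) \<in> (imgA p :: 'a mpoly set)" using assms by (intro gen_mem) auto
    ultimately show ?thesis by simp
  qed
  have g3: "(Var p * alpha :: 'a mpoly) \<in> imgA p"
  proof -
    have "phi_gen p (2 * p) = (Var p * alpha :: 'a mpoly)" using assms unfolding phi_gen_def by auto
    moreover have "phi_gen p (2 * p) \<in> (imgA p :: 'a mpoly set)" using assms by (intro gen_mem) auto
    ultimately show ?thesis by simp
  qed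
  have g4: "(Var p + alpha :: 'a mpoly) \<in> imgA p"
  proof -
    have "phi_gen p p = (Var p + alpha :: 'a mpoly)" using assms unfolding phi_gen_def by auto
    moreover have "phi_gen p p \<in> (imgA p :: 'a mpoly set)" using assms by (intro gen_mem) auto
    ultimately show ?thesis by simp
  qed
  have "(Var i * alpha ^ n :: 'a mpoly) \<in> imgA p \<and> (Var i * alpha ^ (Suc n) :: 'a mpoly) \<in> imgA p" for n
  proof (induction n)
    case 0
    then show ?case using g1 g2 by simp
  next
    case (Suc n)
    have eq: "(Var i * alpha ^ Suc (Suc n) :: 'a mpoly) =
      (Var p + alpha) * (Var i * alpha ^ Suc n) + - ((Var i * alpha ^ n) * (Var p * alpha))"
      by (simp add: algebra_simps)
    have a1: "(Var p + alpha) * (Var i * alpha ^ Suc n) \<in> (imgA p :: 'a mpoly set)"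
      using Suc g4 unfolding imgA_def by (blast intro: subalg_gen.mult)
    have a2: "- ((Var i * alpha ^ n) * (Var p * alpha)) \<in> (imgA p :: 'a mpoly set)"
      using Suc g3 unfolding imgA_def by (blast intro: subalg_gen.mult neg_mem)
    have "(Var i * alpha ^ Suc (Suc n) :: 'a mpoly) \<in> imgA p"
      unfolding eq using a1 a2 unfolding imgA_def by (rule subalg_gen.add)
    then show ?case using Suc by simp
  qed
  then show ?thesis by blast
qed

end
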